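(* Among all allowed 3-stick folded ribbon unknots $K_{w,F}$ in which the folds at all three vertices are of the same type, the minimum ribbonlength is $3\sqrt{3}$, and it is attained when the knot diagram is an equilateral triangle.
   Context: For an oriented polygonal knot diagram $K$ that is a triangle with vertices $v_1,v_2,v_3$ and edges $e_i=[v_i,v_{i+1}]$ (indices mod 3), the fold angle $\theta_i\in[0,\pi]$ at $v_i$ is the angle between $e_{i-1}$ and $e_i$. The folded ribbon $K_w$ of width $w$ has at each $v_i$ a fold line of length $w/\cos(\theta_i/2)$ centered at $v_i$ perpendicular to the bisector of $\theta_i$, with boundary segments parallel to and at distance $w/2$ from each edge joining consecutive fold lines. Folding information $F$ records at each vertex whether the ribbon of $e_i$ lies over (overfold) or under (underfold) the ribbon of $e_{i-1}$; folds of the same type means all overfolds or all underfolds. $K_{w,F}$ is allowed if the ribbon is immersed away from fold lines and admits crossing information (a continuous, antisymmetric, transitive $\pm1$-valued function on pairs of distinct points of the ribbon with the same planar image) agreeing with $F$. The ribbonlength is $\operatorname{length}(K)/w$. *)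

theory Defs
  imports "HOL-Analysis.Analysis"
begin

text \<open>A 3-stick knot diagram is a triangle with vertices v 0, v 1, v 2 in the plane
(modelled as complex numbers); indices are taken mod 3.  Edge e_i = [v i, v (nx i)].\<close>

definition nx :: "nat \<Rightarrow> nat" where "nx i = (i + 1) mod 3"
definition pv :: "nat \<Rightarrow> nat" where "pv i = (i + 2) mod 3"

definition fold_angle :: "(nat \<Rightarrow> complex) \<Rightarrow> nat \<Rightarrow> real" where
  "fold_angle v i = arccos (((v (pv i) - v i) \<bullet> (v (nx i) - v i)) /
                             (norm (v (pv i) - v i) * norm (v (nx i) - v i)))"

definition bisector :: "(nat \<Rightarrow> complex) \<Rightarrow> nat \<Rightarrow> complex" where
  "bisector v i = sgn (v (pv i) - v i) + sgn (v (nx i) - v i)"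

definition fold_seg :: "(nat \<Rightarrow> complex) \<Rightarrow> real \<Rightarrow> nat \<Rightarrow> complex set" where
  "fold_seg v w i =
     (let h = w / (2 * cos (fold_angle v i / 2));
          d = \<i> * sgn (bisector v i)
      in closed_segment (v i - of_real h * d) (v i + of_real h * d))"

definition edge_offset :: "(nat \<Rightarrow> complex) \<Rightarrow> nat \<Rightarrow> complex \<Rightarrow> real" where
  "edge_offset v i p = Im (cnj (sgn (v (nx i) - v i)) * (p - v i))"

text \<open>The piece of the folded ribbon K_w belonging to edge e_i: the quadrilateral bounded by the
fold lines at v_i and v_(i+1) and by the two boundary segments parallel to e_i at distance w/2.
The ribbon is taken open in the width direction (the two boundary segments are removed).\<close>
definition piece :: "(nat \<Rightarrow> complex) \<Rightarrow> real \<Rightarrow> nat \<Rightarrow> complex set" where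
  "piece v w i = {p \<in> convex hull (fold_seg v w i \<union> fold_seg v w (nx i)).
                    \<bar>edge_offset v i p\<bar> < w / 2}"

text \<open>The ribbon is immersed away from the fold lines: each piece is a genuine (non self-crossing)
quadrilateral, i.e. the two fold lines bounding it are disjoint.\<close>
definition immersed_away_from_folds :: "(nat \<Rightarrow> complex) \<Rightarrow> real \<Rightarrow> bool" where
  "immersed_away_from_folds v w \<longleftrightarrow>
     (\<forall>i<3. fold_seg v w i \<inter> fold_seg v w (nx i) = {})"

definition shared :: "nat \<Rightarrow> nat \<Rightarrow> nat" where
  "shared i j = (if j = nx i then nx i else i)"

text \<open>Ribbon points are pairs (i,p) with p in piece i; (i,p) and (j,p) (i \<noteq> j) are the same ribbon
point iff p lies on the fold line they share.  pdom v w i j p says that (i,p) and (j,p) are two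
distinct ribbon points with the same planar image p.\<close>
definition pdom :: "(nat \<Rightarrow> complex) \<Rightarrow> real \<Rightarrow> nat \<Rightarrow> nat \<Rightarrow> complex \<Rightarrow> bool" where
  "pdom v w i j p \<longleftrightarrow> i < 3 \<and> j < 3 \<and> i \<noteq> j \<and> p \<in> piece v w i \<and> p \<in> piece v w j \<and>
                       p \<notin> fold_seg v w (shared i j)"

text \<open>Crossing information: C i j p = 1 means that the ribbon point (i,p) lies over (j,p).\<close>
definition crossing_info ::
  "(nat \<Rightarrow> complex) \<Rightarrow> real \<Rightarrow> (nat \<Rightarrow> nat \<Rightarrow> complex \<Rightarrow> real) \<Rightarrow> bool" where
  "crossing_info v w C \<longleftrightarrow>
     (\<forall>i j p. pdom v w i j p \<longrightarrow> C i j p = 1 \<or> C i j p = -1) \<and>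
     (\<forall>i j p. pdom v w i j p \<longrightarrow> C j i p = - C i j p) \<and>
     (\<forall>i i' j p. pdom v w i j p \<and> pdom v w i' j p \<and> i \<noteq> i' \<and> p \<in> fold_seg v w (shared i i')
         \<longrightarrow> C i j p = C i' j p) \<and>
     (\<forall>i j. i < 3 \<and> j < 3 \<and> i \<noteq> j \<longrightarrow> continuous_on {p. pdom v w i j p} (C i j)) \<and>
     (\<forall>i j k p. pdom v w i j p \<and> pdom v w j k p \<and> pdom v w i k p \<and>
         C i j p = 1 \<and> C j k p = 1 \<longrightarrow> C i k p = 1)"

text \<open>Folding information F: F i = True means an overfold at v_i (ribbon of e_i over ribbon of
e_(i-1)), F i = False an underfold.\<close>
definition agrees_with_folds ::
  "(nat \<Rightarrow> complex) \<Rightarrow> real \<Rightarrow> (nat \<Rightarrow> bool) \<Rightarrow> (nat \<Rightarrow> nat \<Rightarrow> complex \<Rightarrow> real) \<Rightarrow> bool" where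
  "agrees_with_folds v w F C \<longleftrightarrow>
     (\<forall>i<3. \<exists>\<epsilon>>0. \<forall>p. pdom v w i (pv i) p \<and> infdist p (fold_seg v w i) < \<epsilon> \<longrightarrow>
                    C i (pv i) p = (if F i then 1 else -1))"

definition allowed :: "(nat \<Rightarrow> complex) \<Rightarrow> real \<Rightarrow> (nat \<Rightarrow> bool) \<Rightarrow> bool" where
  "allowed v w F \<longleftrightarrow> immersed_away_from_folds v w \<and>
                      (\<exists>C. crossing_info v w C \<and> agrees_with_folds v w F C)"

definition same_type :: "(nat \<Rightarrow> bool) \<Rightarrow> bool" where
  "same_type F \<longleftrightarrow> F 0 = F 1 \<and> F 1 = F 2"

definition ribbonlength :: "(nat \<Rightarrow> complex) \<Rightarrow> real \<Rightarrow> real" where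
  "ribbonlength v w = (dist (v 0) (v 1) + dist (v 1) (v 2) + dist (v 2) (v 0)) / w"

definition equilateral :: "(nat \<Rightarrow> complex) \<Rightarrow> bool" where
  "equilateral v \<longleftrightarrow> dist (v 0) (v 1) = dist (v 1) (v 2) \<and> dist (v 1) (v 2) = dist (v 2) (v 0)"

end

theory Submission
  imports Defs
begin


definition AA :: "(nat \<Rightarrow> complex) \<Rightarrow> nat \<Rightarrow> complex" where "AA v k = v (pv k) - v k"
definition BB :: "(nat \<Rightarrow> complex) \<Rightarrow> nat \<Rightarrow> complex" where "BB v k = v (nx k) - v k"
definition cc :: "(nat \<Rightarrow> complex) \<Rightarrow> nat \<Rightarrow> real" where "cc v k = Re (cnj (sgn (AA v k)) * sgn (BB v k))"
definition HH :: "(nat \<Rightarrow> complex) \<Rightarrow> real \<Rightarrow> nat \<Rightarrow> complex" where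
  "HH v w k = \<i> * of_real w * bisector v k / of_real ((cmod (bisector v k))^2)"

lemma norm2_sum: "(cmod (x + y))^2 = (cmod x)^2 + (cmod y)^2 + 2 * Re (cnj x * y)"
  unfolding cmod_power2 by (simp add: power2_eq_square algebra_simps)

lemma Re_cnj_le: "\<bar>Re (cnj x * y)\<bar> \<le> cmod x * cmod y"
  by (metis abs_Re_le_cmod complex_mod_cnj norm_mult)

lemma cc_bounds: "-1 \<le> cc v k \<and> cc v k \<le> 1"
proof -
  have "\<bar>cc v k\<bar> \<le> cmod (sgn (AA v k)) * cmod (sgn (BB v k))" unfolding cc_def by (rule Re_cnj_le)
  also have "\<dots> \<le> 1" by (simp add: norm_sgn mult_le_one)
  finally show ?thesis by auto
qed

lemma bis_norm2:
  assumes "AA v k \<noteq> 0" "BB v k \<noteq> 0"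
  shows "(cmod (bisector v k))^2 = 2 + 2 * cc v k"
  using assms unfolding bisector_def cc_def AA_def BB_def
  by (simp add: norm2_sum norm_sgn)

lemma fold_angle_eq: "fold_angle v k = arccos (cc v k)"
proof -
  have "(AA v k \<bullet> BB v k) / (cmod (AA v k) * cmod (BB v k)) = cc v k"
    unfolding cc_def inner_complex_def sgn_div_norm
    by (simp add: divide_simps)
  then show ?thesis unfolding fold_angle_def AA_def BB_def by simp
qed

lemma two_cos_half:
  assumes "AA v k \<noteq> 0" "BB v k \<noteq> 0"
  shows "2 * cos (fold_angle v k / 2) = cmod (bisector v k)"
proof -
  define t where "t = fold_angle v k"
  have ct: "cos t = cc v k" using cc_bounds[of v k] by (simp add: t_def fold_angle_eq)
  have t0: "0 \<le> t" "t \<le> pi" using cc_bounds[of v k] by (auto simp: t_def fold_angle_eq arccos_lbound arccos_ubound)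
  have c0: "0 \<le> cos (t/2)" by (rule cos_ge_zero) (use t0 in auto)
  have "cos t = 2 * cos (t/2)^2 - 1" using cos_double_cos[of "t/2"] by simp
  hence "(2 * cos (t/2))^2 = (cmod (bisector v k))^2"
    using bis_norm2[OF assms] ct by (simp add: power_mult_distrib)
  thus ?thesis using c0 unfolding t_def[symmetric]
    by (metis norm_ge_zero power2_eq_imp_eq mult_nonneg_nonneg zero_le_numeral)
qed

lemma fold_seg_eq:
  assumes "AA v k \<noteq> 0" "BB v k \<noteq> 0"
  shows "fold_seg v w k = closed_segment (v k - HH v w k) (v k + HH v w k)"
proof -
  have e: "of_real (w / (2 * cos (fold_angle v k / 2))) * (\<i> * sgn (bisector v k)) = HH v w k"
    unfolding two_cos_half[OF assms] HH_def sgn_div_norm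
    by (simp add: power2_eq_square field_simps scaleR_conv_of_real)
  show ?thesis unfolding fold_seg_def Let_def e ..
qed



lemma real_mult_unit:
  assumes "cmod u = 1" "Im (cnj u * z) = 0"
  shows "z = of_real (Re (cnj u * z)) * u"
proof -
  have "cnj u * z = of_real (Re (cnj u * z))" using assms(2) by (simp add: complex_eq_iff)
  moreover have "u * cnj u = 1" using assms(1) by (metis complex_norm_square mult.commute of_real_1 power_one complex_mult_cnj mult.commute)
  ultimately show ?thesis by (metis mult.assoc mult.commute mult_1)
qed

lemma Re_ofr: "Re (of_real r * z) = r * Re z" by simp
lemma Im_ofr: "Im (of_real r * z) = r * Im z" by simp

lemma seg_param:
  fixes H P :: complex
  assumes "-1 \<le> t" "t \<le> 1"
  shows "P + of_real t * H \<in> closed_segment (P - H) (P + H)"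
proof -
  have g: "(1 - s) *\<^sub>R (P - H) + s *\<^sub>R (P + H) = P + (2 * s - 1) *\<^sub>R H" for s :: real
    by (simp add: scaleR_conv_of_real algebra_simps)
  have "P + of_real t * H = (1 - (t+1)/2) *\<^sub>R (P - H) + ((t+1)/2) *\<^sub>R (P + H)"
    unfolding g proof -
    have "2 * ((t+1)/2) - 1 = t" by (simp add: field_simps)
    thus "P + of_real t * H = P + (2 * ((t+1)/2) - 1) *\<^sub>R H" by (simp add: scaleR_conv_of_real)
  qed
  moreover have "0 \<le> (t+1)/2" "(t+1)/2 \<le> 1" using assms by auto
  ultimately show ?thesis unfolding in_segment by blast
qed

lemma hull_lemma:
  fixes P Q p H1 H2 b1 b2 :: complex and w :: real
  assumes u: "u = sgn (Q - P)" and QP: "Q \<noteq> P" and w: "w > 0"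
    and h1: "Im (cnj u * H1) = w/2" and h2: "Im (cnj u * H2) = - w/2"
    and f1: "Re (cnj b1 * H1) = 0" and f2: "Re (cnj b2 * H2) = 0"
    and g1: "Re (cnj b1 * u) > 0" and g2: "Re (cnj b2 * u) < 0"
    and po: "\<bar>Im (cnj u * (p - P))\<bar> \<le> w/2"
    and p1: "Re (cnj b1 * (p - P)) \<ge> 0" and p2: "Re (cnj b2 * (p - Q)) \<ge> 0"
  shows "p \<in> convex hull (closed_segment (P - H1) (P + H1) \<union> closed_segment (Q - H2) (Q + H2))"
proof -
  define ofs where "ofs = Im (cnj u * (p - P))"
  define t where "t = 2 * ofs / w"
  have "\<bar>ofs\<bar> \<le> w/2" using po by (simp add: ofs_def)
  hence t1: "-1 \<le> t" "t \<le> 1" using w by (auto simp: t_def field_simps abs_le_iff)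
  define Y where "Y = P + of_real t * H1"
  define Z where "Z = Q + of_real (-t) * H2"
  have Y: "Y \<in> closed_segment (P - H1) (P + H1)" unfolding Y_def by (rule seg_param; use t1 in auto)
  have Z: "Z \<in> closed_segment (Q - H2) (Q + H2)" unfolding Z_def by (rule seg_param; use t1 in auto)
  have un: "cmod u = 1" using u QP by (simp add: norm_sgn)
  have uQP: "Im (cnj u * (Q - P)) = 0" using u QP
    by (simp add: sgn_div_norm complex_eq_iff)
  have Yo: "Im (cnj u * (Y - p)) = 0"
  proof -
    have "cnj u * (Y - p) = - (cnj u * (p - P)) + of_real t * (cnj u * H1)" by (simp add: Y_def algebra_simps)
    hence "Im (cnj u * (Y - p)) = - ofs + t * (w/2)" using h1 by (simp add: ofs_def)
    thus ?thesis using w by (simp add: t_def)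
  qed
  have Zo: "Im (cnj u * (Z - p)) = 0"
  proof -
    have "cnj u * (Z - p) = cnj u * (Q - P) - (cnj u * (p - P)) - of_real t * (cnj u * H2)" by (simp add: Z_def algebra_simps)
    hence "Im (cnj u * (Z - p)) = - ofs + t * (w/2)" using h2 uQP by (simp add: ofs_def)
    thus ?thesis using w by (simp add: t_def)
  qed
  define \<alpha> where "\<alpha> = Re (cnj u * (Y - p))"
  define \<beta> where "\<beta> = Re (cnj u * (Z - p))"
  have "Y - p = of_real \<alpha> * u" unfolding \<alpha>_def by (rule real_mult_unit[OF un Yo])
  hence Ya: "Y = p + of_real \<alpha> * u" by (simp add: algebra_simps)
  have "Z - p = of_real \<beta> * u" unfolding \<beta>_def by (rule real_mult_unit[OF un Zo])
  hence Zb: "Z = p + of_real \<beta> * u" by (simp add: algebra_simps)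
  have "cnj b1 * (Y - P) = of_real t * (cnj b1 * H1)" by (simp add: Y_def algebra_simps)
  hence fY: "Re (cnj b1 * (Y - P)) = 0" by (simp only: Re_ofr f1 mult_zero_right)
  have "cnj b1 * (Y - P) = cnj b1 * (p - P) + of_real \<alpha> * (cnj b1 * u)" by (simp add: Ya algebra_simps)
  hence "Re (cnj b1 * (p - P)) + \<alpha> * Re (cnj b1 * u) = 0" using fY by simp
  hence a0: "\<alpha> \<le> 0" using g1 p1 by (smt (verit) mult_pos_pos)
  have "cnj b2 * (Z - Q) = of_real (-t) * (cnj b2 * H2)" by (simp add: Z_def algebra_simps)
  hence fZ: "Re (cnj b2 * (Z - Q)) = 0" by (simp only: Re_ofr f2 mult_zero_right)
  have "cnj b2 * (Z - Q) = cnj b2 * (p - Q) + of_real \<beta> * (cnj b2 * u)" by (simp add: Zb algebra_simps)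
  hence "Re (cnj b2 * (p - Q)) + \<beta> * Re (cnj b2 * u) = 0" using fZ by simp
  hence b0: "\<beta> \<ge> 0" using g2 p2 by (smt (verit) mult_neg_neg)
  let ?S = "convex hull (closed_segment (P - H1) (P + H1) \<union> closed_segment (Q - H2) (Q + H2))"
  have YS: "Y \<in> ?S" by (rule hull_inc) (use Y in blast)
  have ZS: "Z \<in> ?S" by (rule hull_inc) (use Z in blast)
  show ?thesis
  proof (cases "\<beta> - \<alpha> = 0")
    case True
    hence "\<alpha> = 0" using a0 b0 by linarith
    hence "Y = p" using Ya by simp
    thus ?thesis using YS by simp
  next
    case False
    hence bp: "\<beta> - \<alpha> > 0" using a0 b0 by linarith
    define l where "l = - \<alpha> / (\<beta> - \<alpha>)"
    have l: "0 \<le> l" "l \<le> 1" using a0 b0 bp by (auto simp: l_def field_simps)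
    have "(1 - l) *\<^sub>R Y + l *\<^sub>R Z = p"
    proof -
      have "(1 - l) *\<^sub>R Y + l *\<^sub>R Z = p + of_real ((1 - l) * \<alpha> + l * \<beta>) * u"
        by (simp add: Ya Zb scaleR_conv_of_real algebra_simps)
      moreover have "(1 - l) * \<alpha> + l * \<beta> = 0" using bp by (simp add: l_def field_simps)
      ultimately show ?thesis by simp
    qed
    moreover have "(1 - l) *\<^sub>R Y + l *\<^sub>R Z \<in> ?S"
      by (rule convexD_alt[OF convex_convex_hull YS ZS l])
    ultimately show ?thesis by metis
  qed
qed



definition DD :: "(nat \<Rightarrow> complex) \<Rightarrow> real" where "DD v = Im (cnj (v 1 - v 0) * (v 2 - v 0))"

lemma DD_collinear:
  assumes "\<not> collinear {v 0, v 1, v 2}" shows "DD v \<noteq> 0"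
proof
  assume D: "DD v = 0"
  have eq: "{v 0, v 1, v 2} = {v 1, v 2, v 0}" by auto
  show False
  proof (cases "v 1 = v 0")
    case True
    hence "collinear {v 1, v 2, v 0}" unfolding collinear_3_expand by simp
    thus False using assms eq by simp
  next
    case False
    define x where "x = v 1 - v 0"
    have x0: "x \<noteq> 0" using False by (simp add: x_def)
    have un: "cmod (sgn x) = 1" using x0 by (simp add: norm_sgn)
    have "Im (cnj (sgn x) * (v 2 - v 0)) = 0" using D x0
      by (simp add: DD_def x_def sgn_div_norm)
    from real_mult_unit[OF un this]
    obtain m where m: "v 2 - v 0 = of_real m * sgn x" by blast
    define mu where "mu = m / cmod x"
    have "v 2 = mu *\<^sub>R v 1 + (1 - mu) *\<^sub>R v 0"
      using m x0 by (simp add: mu_def sgn_div_norm scaleR_conv_of_real x_def field_simps)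
    hence "collinear {v 1, v 2, v 0}" unfolding collinear_3_expand by blast
    thus False using assms eq by simp
  qed
qed



lemma nxpv[simp]: "nx 0 = 1" "nx 1 = 2" "nx 2 = 0" "pv 0 = 2" "pv 1 = 0" "pv 2 = 1" "nx (Suc 0) = 2" "pv (Suc 0) = 0"
  by (simp_all add: nx_def pv_def)

lemma bis_eq: "bisector v k = sgn (AA v k) + sgn (BB v k)" by (simp add: bisector_def AA_def BB_def)

lemma gen_b: "cmod b = 1 \<Longrightarrow> Re (cnj (a + b) * b) = 1 + Re (cnj a * b)"
  using cmod_power2[of b] by (simp add: power2_eq_square algebra_simps)
lemma gen_a: "cmod a = 1 \<Longrightarrow> Re (cnj (a + b) * a) = 1 + Re (cnj a * b)"
  using cmod_power2[of a] by (simp add: power2_eq_square algebra_simps)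

lemma Im_H: "Im (cnj x * (\<i> * of_real w * z / of_real n)) = w * Re (cnj z * x) / n"
  by (simp add: algebra_simps add_divide_distrib diff_divide_distrib)
lemma Re_H: "Re (cnj z * (\<i> * of_real w * z / of_real n)) = 0"
  by (simp add: algebra_simps add_divide_distrib diff_divide_distrib)

lemma unit_sq: "cmod a = 1 \<Longrightarrow> Re a * Re a + Im a * Im a = 1"
  using cmod_power2[of a] by (simp add: power2_eq_square)

lemma Im_AB: "k < 3 \<Longrightarrow> Im (cnj (AA v k) * BB v k) = - DD v"
proof -
  assume "k < 3"
  hence "k = 0 \<or> k = 1 \<or> k = 2" by auto
  thus ?thesis by (elim disjE) (simp_all add: AA_def BB_def DD_def algebra_simps)
qed

lemma cc_alt: "cc v k = Re (cnj (AA v k) * BB v k) / (cmod (AA v k) * cmod (BB v k))"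
  unfolding cc_def sgn_div_norm by (simp add: divide_simps)

context
  fixes v :: "nat \<Rightarrow> complex" and k :: nat
  assumes nz: "Im (cnj (AA v k) * BB v k) \<noteq> 0"
begin

lemma A0: "AA v k \<noteq> 0" using nz by auto
lemma B0: "BB v k \<noteq> 0" using nz by auto

lemma cc_gt: "cc v k > -1"
proof -
  let ?a = "AA v k" and ?b = "BB v k"
  have m: "cmod (cnj ?a * ?b) = cmod ?a * cmod ?b" by (simp add: norm_mult)
  have "(Re (cnj ?a * ?b))^2 + (Im (cnj ?a * ?b))^2 = (cmod ?a * cmod ?b)^2"
    unfolding m[symmetric] cmod_power2 ..
  moreover have "(Im (cnj ?a * ?b))^2 > 0" using nz by simp
  ultimately have "\<bar>Re (cnj ?a * ?b)\<bar>^2 < (cmod ?a * cmod ?b)^2" by (simp only: power2_abs)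
  hence "\<bar>Re (cnj ?a * ?b)\<bar> < cmod ?a * cmod ?b"
    by (rule power2_less_imp_less) simp
  hence "- (cmod ?a * cmod ?b) < Re (cnj ?a * ?b)" by linarith
  moreover have "cmod ?a * cmod ?b > 0" using A0 B0 by simp
  ultimately show ?thesis unfolding cc_alt by (simp add: field_simps)
qed

lemma ua: "cmod (sgn (AA v k)) = 1" using A0 by (simp add: norm_sgn)
lemma ub: "cmod (sgn (BB v k)) = 1" using B0 by (simp add: norm_sgn)

lemma bisB: "Re (cnj (bisector v k) * sgn (BB v k)) = 1 + cc v k"
  unfolding bis_eq cc_def by (rule gen_b[OF ub])
lemma bisA: "Re (cnj (bisector v k) * sgn (AA v k)) = 1 + cc v k"
  unfolding bis_eq cc_def by (rule gen_a[OF ua])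

lemma N: "(cmod (bisector v k))^2 = 2 + 2 * cc v k" by (rule bis_norm2[OF A0 B0])

lemma HB: "Im (cnj (sgn (BB v k)) * HH v w k) = w/2"
proof -
  have "Im (cnj (sgn (BB v k)) * HH v w k) = w * Re (cnj (bisector v k) * sgn (BB v k)) / (2 + 2 * cc v k)"
    unfolding HH_def N Im_H ..
  moreover have "w * (1 + cc v k) / (2 + 2 * cc v k) = w/2" using cc_gt by (simp add: field_simps)
  ultimately show ?thesis unfolding bisB by simp
qed

lemma HA: "Im (cnj (sgn (AA v k)) * HH v w k) = w/2"
proof -
  have "Im (cnj (sgn (AA v k)) * HH v w k) = w * Re (cnj (bisector v k) * sgn (AA v k)) / (2 + 2 * cc v k)"
    unfolding HH_def N Im_H ..
  moreover have "w * (1 + cc v k) / (2 + 2 * cc v k) = w/2" using cc_gt by (simp add: field_simps)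
  ultimately show ?thesis unfolding bisA by simp
qed

lemma Hbis: "Re (cnj (bisector v k) * HH v w k) = 0"
  unfolding HH_def by (rule Re_H)

lemma bisAA: "Re (cnj (bisector v k) * AA v k) \<ge> 0"
proof -
  have "AA v k = of_real (cmod (AA v k)) * sgn (AA v k)" using A0 by (simp add: sgn_eq)
  hence "Re (cnj (bisector v k) * AA v k) = cmod (AA v k) * (1 + cc v k)"
    by (metis Re_ofr bisA mult.left_commute)
  thus ?thesis using cc_gt by simp
qed

lemma bisBB: "Re (cnj (bisector v k) * BB v k) \<ge> 0"
proof -
  have "BB v k = of_real (cmod (BB v k)) * sgn (BB v k)" using B0 by (simp add: sgn_eq)
  hence "Re (cnj (bisector v k) * BB v k) = cmod (BB v k) * (1 + cc v k)"
    by (metis Re_ofr bisB mult.left_commute)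
  thus ?thesis using cc_gt by simp
qed

lemma bis0: "bisector v k \<noteq> 0"
  using N cc_gt by auto

end



definition ell :: "(nat \<Rightarrow> complex) \<Rightarrow> nat \<Rightarrow> real" where "ell v k = cmod (v (nx k) - v k)"
definition LL :: "(nat \<Rightarrow> complex) \<Rightarrow> real" where "LL v = ell v 0 + ell v 1 + ell v 2"
definition II :: "(nat \<Rightarrow> complex) \<Rightarrow> complex" where
  "II v = (of_real (ell v 1) * v 0 + of_real (ell v 2) * v 1 + of_real (ell v 0) * v 2) / of_real (LL v)"

lemma nxpv3: "k < 3 \<Longrightarrow> nx k < 3 \<and> pv k < 3 \<and> pv (nx k) = k \<and> nx (pv k) = k"
proof -
  assume "k < 3" hence "k = 0 \<or> k = 1 \<or> k = 2" by auto
  thus ?thesis by (elim disjE) simp_all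
qed

lemma Re_lin: "Re (cnj b * (of_real s * x + of_real t * y)) = s * Re (cnj b * x) + t * Re (cnj b * y)"
  by (simp add: algebra_simps)
lemma Im_lin: "Im (cnj b * (of_real s * x + of_real t * y)) = s * Im (cnj b * x) + t * Im (cnj b * y)"
  by (simp add: algebra_simps)

context
  fixes v :: "nat \<Rightarrow> complex"
  assumes nc: "\<not> collinear {v 0, v 1, v 2}"
begin

lemma D0: "DD v \<noteq> 0" by (rule DD_collinear[OF nc])

lemma nzk: "k < 3 \<Longrightarrow> Im (cnj (AA v k) * BB v k) \<noteq> 0"
  using Im_AB D0 by simp

lemma ell_pos: "k < 3 \<Longrightarrow> ell v k > 0"
  using B0[OF nzk] by (simp add: ell_def BB_def)

lemma L_pos: "LL v > 0" using ell_pos[of 0] ell_pos[of 1] ell_pos[of 2] by (simp add: LL_def)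

lemma I0: "k < 3 \<Longrightarrow> of_real (LL v) * (II v - v k) =
     of_real (cmod (BB v k)) * AA v k + of_real (cmod (AA v k)) * BB v k"
proof -
  assume k: "k < 3"
  have LI: "of_real (LL v) * II v = of_real (ell v 1) * v 0 + of_real (ell v 2) * v 1 + of_real (ell v 0) * v 2"
    using L_pos unfolding II_def by simp
  have n: "cmod (AA v 0) = ell v 2" "cmod (BB v 0) = ell v 0"
          "cmod (AA v 1) = ell v 0" "cmod (BB v 1) = ell v 1"
          "cmod (AA v 2) = ell v 1" "cmod (BB v 2) = ell v 2"
    by (simp_all add: AA_def BB_def ell_def norm_minus_commute)
  have "k = 0 \<or> k = 1 \<or> k = 2" using k by auto
  thus ?thesis unfolding right_diff_distrib LI unfolding LL_def
    by (elim disjE) (simp_all only: n, simp_all add: algebra_simps AA_def BB_def)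
qed

lemma I_bis: "k < 3 \<Longrightarrow> II v - v k = of_real (cmod (AA v k) * cmod (BB v k) / LL v) * bisector v k"
proof -
  assume k: "k < 3"
  have a: "cmod (AA v k) \<noteq> 0" and b: "cmod (BB v k) \<noteq> 0" using A0[OF nzk[OF k]] B0[OF nzk[OF k]] by auto
  have L: "LL v \<noteq> 0" using L_pos by simp
  have "II v - v k = (of_real (cmod (BB v k)) * AA v k + of_real (cmod (AA v k)) * BB v k) / of_real (LL v)"
    using I0[OF k] L by (simp add: field_simps)
  also have "\<dots> = of_real (cmod (AA v k) * cmod (BB v k) / LL v) * bisector v k"
    unfolding bis_eq sgn_eq using a b L by (simp add: field_simps)
  finally show ?thesis .
qed

lemma I_side: "k < 3 \<Longrightarrow> Re (cnj (bisector v k) * (II v - v k)) > 0"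
proof -
  assume k: "k < 3"
  define c where "c = cmod (AA v k) * cmod (BB v k) / LL v"
  have c: "c > 0" using A0[OF nzk[OF k]] B0[OF nzk[OF k]] L_pos by (simp add: c_def)
  have "Re (cnj (bisector v k) * (II v - v k)) = c * (cmod (bisector v k))^2"
    unfolding I_bis[OF k] c_def[symmetric] cmod_power2 by (simp add: algebra_simps power2_eq_square)
  thus ?thesis using c bis0[OF nzk[OF k]] by simp
qed

lemma I_off: "k < 3 \<Longrightarrow> edge_offset v k (II v) = DD v / LL v"
proof -
  assume k: "k < 3"
  let ?A = "AA v k" and ?B = "BB v k"
  have b: "cmod ?B \<noteq> 0" using B0[OF nzk[OF k]] by simp
  have L: "LL v \<noteq> 0" using L_pos by simp
  have "II v - v k = (of_real (cmod ?B) * ?A + of_real (cmod ?A) * ?B) / of_real (LL v)"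
    using I0[OF k] L by (simp add: field_simps)
  hence "edge_offset v k (II v) = Im (cnj ?B * (of_real (cmod ?B) * ?A + of_real (cmod ?A) * ?B)) / (cmod ?B * LL v)"
    unfolding edge_offset_def BB_def[symmetric] sgn_eq by (simp add: Im_divide_of_real)
  also have "\<dots> = cmod ?B * Im (cnj ?B * ?A) / (cmod ?B * LL v)"
    unfolding Im_lin by (simp add: algebra_simps)
  also have "Im (cnj ?B * ?A) = - Im (cnj ?A * ?B)" by (simp add: algebra_simps)
  also have "Im (cnj ?A * ?B) = - DD v" by (rule Im_AB[OF k])
  finally show ?thesis using b by simp
qed

end

lemma off_vk: "edge_offset v k (v k) = 0"
  by (simp add: edge_offset_def)
lemma off_vnx: "edge_offset v k (v (nx k)) = 0"
  unfolding edge_offset_def sgn_eq by (simp add: algebra_simps)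
lemma off_aff: "edge_offset v j (x + of_real t * (y - x)) = edge_offset v j x + t * (edge_offset v j y - edge_offset v j x)"
  unfolding edge_offset_def by (simp add: algebra_simps)



context
  fixes v :: "nat \<Rightarrow> complex"
  assumes nc: "\<not> collinear {v 0, v 1, v 2}"
begin

lemma fold_side:
  assumes k: "k < 3" and q: "q \<in> fold_seg v w k"
  shows "Re (cnj (bisector v k) * (q - v k)) = 0"
proof -
  have nz: "Im (cnj (AA v k) * BB v k) \<noteq> 0" by (rule nzk[OF nc k])
  obtain s where q': "q = (1 - s) *\<^sub>R (v k - HH v w k) + s *\<^sub>R (v k + HH v w k)"
    using q unfolding fold_seg_eq[OF A0[OF nz] B0[OF nz]] in_segment by blast
  have "q - v k = of_real (2 * s - 1) * HH v w k"
    unfolding q' by (simp add: scaleR_conv_of_real algebra_simps)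
  hence "Re (cnj (bisector v k) * (q - v k)) = (2 * s - 1) * Re (cnj (bisector v k) * HH v w k)"
    by (simp only: mult.left_commute[of "cnj _"] Re_ofr)
  thus ?thesis using Hbis[OF nz] by simp
qed

lemma piece_mem:
  assumes j: "j < 3" and w: "w > 0"
    and po: "\<bar>edge_offset v j p\<bar> < w/2"
    and p1: "Re (cnj (bisector v j) * (p - v j)) \<ge> 0"
    and p2: "Re (cnj (bisector v (nx j)) * (p - v (nx j))) \<ge> 0"
  shows "p \<in> piece v w j"
proof -
  have j': "nx j < 3" "pv (nx j) = j" using nxpv3[OF j] by auto
  have nz: "Im (cnj (AA v j) * BB v j) \<noteq> 0" by (rule nzk[OF nc j])
  have nz': "Im (cnj (AA v (nx j)) * BB v (nx j)) \<noteq> 0" by (rule nzk[OF nc j'(1)])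
  have AB: "AA v (nx j) = - BB v j" using j'(2) by (simp add: AA_def BB_def)
  define u where "u = sgn (v (nx j) - v j)"
  have uB: "u = sgn (BB v j)" by (simp add: u_def BB_def)
  have uA: "u = - sgn (AA v (nx j))" by (simp add: uB AB sgn_minus)
  have QP: "v (nx j) \<noteq> v j" using B0[OF nz] by (simp add: BB_def)
  have h1: "Im (cnj u * HH v w j) = w/2" unfolding uB by (rule HB[OF nz])
  have h2: "Im (cnj u * HH v w (nx j)) = - w/2" using HA[OF nz', of w] unfolding uA by simp
  have g1: "Re (cnj (bisector v j) * u) > 0" unfolding uB bisB[OF nz] using cc_gt[OF nz] by simp
  have g2: "Re (cnj (bisector v (nx j)) * u) < 0" using bisA[OF nz'] cc_gt[OF nz'] unfolding uA by simp
  have "p \<in> convex hull (closed_segment (v j - HH v w j) (v j + HH v w j) \<union>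
                          closed_segment (v (nx j) - HH v w (nx j)) (v (nx j) + HH v w (nx j)))"
    apply (rule hull_lemma[OF u_def QP w h1 h2 Hbis[OF nz] Hbis[OF nz'] g1 g2 _ p1 p2])
    using po by (simp add: edge_offset_def u_def)
  thus ?thesis using po
    unfolding piece_def fold_seg_eq[OF A0[OF nz] B0[OF nz]] fold_seg_eq[OF A0[OF nz'] B0[OF nz']]
    by simp
qed

end


lemma shared_pv: "k < 3 \<Longrightarrow> shared k (pv k) = k \<and> pv k \<noteq> k"
proof -
  assume "k < 3" hence "k = 0 \<or> k = 1 \<or> k = 2" by auto
  thus ?thesis by (elim disjE) (simp_all add: shared_def)
qed

context
  fixes v :: "nat \<Rightarrow> complex" and w :: real
  assumes nc: "\<not> collinear {v 0, v 1, v 2}" and w: "w > 0" and small: "\<bar>DD v\<bar> / LL v < w/2"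
begin

lemma seg_pieces:
  assumes k: "k < 3" and t: "0 < t" "t \<le> 1"
  defines "p \<equiv> v k + of_real t * (II v - v k)"
  shows "p \<in> piece v w k \<and> p \<in> piece v w (pv k) \<and> p \<notin> fold_seg v w k"
proof -
  have kk: "nx k < 3" "pv k < 3" "pv (nx k) = k" "nx (pv k) = k" using nxpv3[OF k] by auto
  have Lp: "LL v > 0" by (rule L_pos[OF nc])
  have offk: "edge_offset v k p = t * (DD v / LL v)"
    unfolding p_def off_aff off_vk I_off[OF nc k] by simp
  have offp: "edge_offset v (pv k) p = t * (DD v / LL v)"
    unfolding p_def off_aff I_off[OF nc kk(2)] using off_vnx[of v "pv k"] kk(4) by simp
  have tb: "\<bar>t * (DD v / LL v)\<bar> < w/2"
  proof -
    have "\<bar>t * (DD v / LL v)\<bar> = t * (\<bar>DD v\<bar> / LL v)" using t Lp by (simp add: abs_mult)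
    also have "\<dots> \<le> \<bar>DD v\<bar> / LL v" using t Lp by (intro mult_left_le_one_le) auto
    finally show ?thesis using small by linarith
  qed
  have sk: "Re (cnj (bisector v k) * (p - v k)) > 0"
  proof -
    have "p - v k = of_real t * (II v - v k)" by (simp add: p_def)
    hence "Re (cnj (bisector v k) * (p - v k)) = t * Re (cnj (bisector v k) * (II v - v k))"
      by (simp only: mult.left_commute[of "cnj _"] Re_ofr)
    thus ?thesis using I_side[OF nc k] t by simp
  qed
  have snx: "Re (cnj (bisector v (nx k)) * (p - v (nx k))) \<ge> 0"
  proof -
    have "p - v (nx k) = of_real (1 - t) * AA v (nx k) + of_real t * (II v - v (nx k))"
      using kk(3) by (simp add: p_def AA_def algebra_simps)
    hence "Re (cnj (bisector v (nx k)) * (p - v (nx k))) =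
       (1 - t) * Re (cnj (bisector v (nx k)) * AA v (nx k)) + t * Re (cnj (bisector v (nx k)) * (II v - v (nx k)))"
      by (simp only: Re_lin)
    moreover have "Re (cnj (bisector v (nx k)) * AA v (nx k)) \<ge> 0" by (rule bisAA[OF nzk[OF nc kk(1)]])
    moreover have "Re (cnj (bisector v (nx k)) * (II v - v (nx k))) > 0" by (rule I_side[OF nc kk(1)])
    ultimately show ?thesis using t by (simp add: add_nonneg_nonneg)
  qed
  have spv: "Re (cnj (bisector v (pv k)) * (p - v (pv k))) \<ge> 0"
  proof -
    have "p - v (pv k) = of_real (1 - t) * BB v (pv k) + of_real t * (II v - v (pv k))"
      using kk(4) by (simp add: p_def BB_def algebra_simps)
    hence "Re (cnj (bisector v (pv k)) * (p - v (pv k))) =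
       (1 - t) * Re (cnj (bisector v (pv k)) * BB v (pv k)) + t * Re (cnj (bisector v (pv k)) * (II v - v (pv k)))"
      by (simp only: Re_lin)
    moreover have "Re (cnj (bisector v (pv k)) * BB v (pv k)) \<ge> 0" by (rule bisBB[OF nzk[OF nc kk(2)]])
    moreover have "Re (cnj (bisector v (pv k)) * (II v - v (pv k))) > 0" by (rule I_side[OF nc kk(2)])
    ultimately show ?thesis using t by (simp add: add_nonneg_nonneg)
  qed
  have 1: "p \<in> piece v w k"
    by (rule piece_mem[OF nc k w]) (use offk tb sk snx in auto)
  have 2: "p \<in> piece v w (pv k)"
    by (rule piece_mem[OF nc kk(2) w]) (use offp tb sk spv kk(4) in auto)
  have 3: "p \<notin> fold_seg v w k" using fold_side[OF nc k] sk by fastforce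
  show ?thesis using 1 2 3 by blast
qed

lemma seg_pdom:
  assumes k: "k < 3" and t: "0 < t" "t \<le> 1"
  shows "pdom v w k (pv k) (v k + of_real t * (II v - v k))"
  using seg_pieces[OF k t] shared_pv[OF k] nxpv3[OF k] k unfolding pdom_def by auto

lemma I_pdom:
  assumes "i < 3" "j < 3" "i \<noteq> j"
  shows "pdom v w i j (II v)"
proof -
  have inp: "II v \<in> piece v w k" if "k < 3" for k
    using seg_pieces[OF that, of 1] by simp
  have nf: "II v \<notin> fold_seg v w k" if "k < 3" for k
    using fold_side[OF nc that, of "II v" w] I_side[OF nc that] by auto
  have "shared i j < 3" using assms nxpv3 unfolding shared_def by auto
  thus ?thesis using assms inp nf unfolding pdom_def by auto
qed

end


lemma amgm3:
  fixes x y z :: real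
  assumes "x \<ge> 0" "y \<ge> 0" "z \<ge> 0"
  shows "27 * (x * y * z) \<le> (x + y + z)^3"
proof -
  have a: "(x + y + z) * ((x - y)^2 + (y - z)^2 + (z - x)^2) \<ge> 0" using assms by simp
  have b: "x * (y - z)^2 + y * (z - x)^2 + z * (x - y)^2 \<ge> 0" using assms by simp
  have e: "2 * ((x + y + z)^3 - 27 * (x * y * z)) =
     (x + y + z) * ((x - y)^2 + (y - z)^2 + (z - x)^2) + 6 * (x * (y - z)^2 + y * (z - x)^2 + z * (x - y)^2)"
    by (simp add: power2_eq_square power3_eq_cube algebra_simps)
  define S where "S = (x + y + z) * ((x - y)^2 + (y - z)^2 + (z - x)^2) + 6 * (x * (y - z)^2 + y * (z - x)^2 + z * (x - y)^2)"
  have "S \<ge> 0" using a b unfolding S_def by simp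
  hence "2 * ((x + y + z)^3 - 27 * (x * y * z)) \<ge> 0" using e unfolding S_def[symmetric] by simp
  thus ?thesis by simp
qed

lemma heron_bound:
  fixes a b :: complex
  shows "108 * (Im (cnj a * b))^2 \<le> (cmod a + cmod (b - a) + cmod b)^4"
proof -
  define p where "p = cmod a"
  define q where "q = cmod (b - a)"
  define r where "r = cmod b"
  define R where "R = Re (cnj a * b)"
  define D where "D = Im (cnj a * b)"
  have lag: "R^2 + D^2 = p^2 * r^2"
    unfolding R_def D_def p_def r_def cmod_power2 by (simp add: power2_eq_square algebra_simps)
  have cos: "q^2 = p^2 + r^2 - 2 * R"
    unfolding R_def q_def p_def r_def cmod_power2 by (simp add: power2_eq_square algebra_simps)
  have "4 * D^2 = 4 * p^2 * r^2 - (p^2 + r^2 - q^2)^2"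
  proof -
    have "p^2 + r^2 - q^2 = 2 * R" using cos by simp
    thus ?thesis using lag by (simp add: power2_eq_square algebra_simps)
  qed
  also have "\<dots> = (p + q + r) * ((- p + q + r) * (p - q + r) * (p + q - r))"
    by (simp add: power2_eq_square algebra_simps)
  also have "\<dots> \<le> (p + q + r) * ((p + q + r)^3 / 27)"
  proof (rule mult_left_mono)
    have t1: "q \<le> p + r" unfolding p_def q_def r_def using norm_triangle_ineq4[of b a] by simp
    have t2: "p \<le> q + r" unfolding p_def q_def r_def using norm_triangle_ineq4[of b "b - a"] by simp
    have t3: "r \<le> p + q" unfolding p_def q_def r_def using norm_triangle_ineq[of a "b - a"] by simp
    have am: "27 * ((- p + q + r) * (p - q + r) * (p + q - r)) \<le> ((- p + q + r) + (p - q + r) + (p + q - r))^3"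
      by (rule amgm3) (use t1 t2 t3 in auto)
    have s: "(- p + q + r) + (p - q + r) + (p + q - r) = p + q + r" by simp
    show "(- p + q + r) * (p - q + r) * (p + q - r) \<le> (p + q + r)^3 / 27" using am[unfolded s] by linarith
    show "0 \<le> p + q + r" by (simp add: p_def q_def r_def)
  qed
  finally have "4 * D^2 \<le> (p + q + r) * ((p + q + r)^3 / 27)" .
  hence "108 * D^2 \<le> (p + q + r)^4" by (simp add: power_def field_simps numeral_eq_Suc)
  thus ?thesis by (simp add: D_def p_def q_def r_def add.assoc add.commute add.left_commute)
qed

lemma LL_eq: "LL v = cmod (v 1 - v 0) + cmod ((v 2 - v 0) - (v 1 - v 0)) + cmod (v 2 - v 0)"
  unfolding LL_def ell_def by (simp add: norm_minus_commute)

lemma DD_bound: "108 * (DD v)^2 \<le> (LL v)^4"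
  unfolding DD_def LL_eq by (rule heron_bound)

lemma ribbon_eq: "ribbonlength v w = LL v / w"
  unfolding ribbonlength_def LL_def ell_def dist_norm by (simp add: norm_minus_commute)

lemma small_of_ribbon:
  assumes nc: "\<not> collinear {v 0, v 1, v 2}" and w: "w > 0" and rl: "ribbonlength v w < 3 * sqrt 3"
  shows "\<bar>DD v\<bar> / LL v < w/2"
proof -
  have Lp: "LL v > 0" by (rule L_pos[OF nc])
  have "LL v < 3 * sqrt 3 * w" using rl w unfolding ribbon_eq by (simp add: divide_less_eq)
  hence "(LL v)^2 < (3 * sqrt 3 * w)^2" by (rule power_strict_mono) (use Lp in auto)
  also have "(3 * sqrt 3 * w)^2 = 27 * w^2" by (simp add: power_mult_distrib)
  finally have L2: "(LL v)^2 < 27 * w^2" .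
  have p4: "(LL v)^4 = (LL v)^2 * (LL v)^2" by (simp flip: power_add)
  have "108 * (DD v)^2 \<le> (LL v)^2 * (LL v)^2" using DD_bound[of v] unfolding p4 .
  also have "\<dots> < (LL v)^2 * (27 * w^2)" using L2 by (rule mult_strict_left_mono) (use Lp in auto)
  finally have "(2 * \<bar>DD v\<bar>)^2 < (w * LL v)^2" by (simp add: power_mult_distrib power2_abs)
  hence "2 * \<bar>DD v\<bar> < w * LL v" by (rule power2_less_imp_less) (use w Lp in auto)
  thus ?thesis using Lp by (simp add: divide_less_eq)
qed



lemma vk_fold: "Im (cnj (AA v k) * BB v k) \<noteq> 0 \<Longrightarrow> v k \<in> fold_seg v w k"
  using seg_param[of 0 "v k" "HH v w k"] fold_seg_eq[OF A0 B0, of v k w] by simp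

lemma ci_D:
  assumes "crossing_info v w C"
  shows ci_pm: "\<And>i j p. pdom v w i j p \<Longrightarrow> C i j p = 1 \<or> C i j p = -1"
    and ci_anti: "\<And>i j p. pdom v w i j p \<Longrightarrow> C j i p = - C i j p"
    and ci_cont: "\<And>i j. i < 3 \<Longrightarrow> j < 3 \<Longrightarrow> i \<noteq> j \<Longrightarrow> continuous_on {p. pdom v w i j p} (C i j)"
    and ci_tr: "\<And>i j k p. pdom v w i j p \<Longrightarrow> pdom v w j k p \<Longrightarrow> pdom v w i k p \<Longrightarrow>
         C i j p = 1 \<Longrightarrow> C j k p = 1 \<Longrightarrow> C i k p = 1"
proof -
  note h = assms[unfolded crossing_info_def]
  from h have h1: "\<forall>i j p. pdom v w i j p \<longrightarrow> C i j p = 1 \<or> C i j p = -1" by (rule conjunct1)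
  from h have h2: "\<forall>i j p. pdom v w i j p \<longrightarrow> C j i p = - C i j p" by (rule conjunct1[OF conjunct2])
  from h have h4: "\<forall>i j. i < 3 \<and> j < 3 \<and> i \<noteq> j \<longrightarrow> continuous_on {p. pdom v w i j p} (C i j)"
    by (rule conjunct1[OF conjunct2[OF conjunct2[OF conjunct2]]])
  from h have h5: "\<forall>i j k p. pdom v w i j p \<and> pdom v w j k p \<and> pdom v w i k p \<and>
         C i j p = 1 \<and> C j k p = 1 \<longrightarrow> C i k p = 1"
    by (rule conjunct2[OF conjunct2[OF conjunct2[OF conjunct2]]])
  show "\<And>i j p. pdom v w i j p \<Longrightarrow> C i j p = 1 \<or> C i j p = -1" using h1 by blast
  show "\<And>i j p. pdom v w i j p \<Longrightarrow> C j i p = - C i j p" using h2 by blast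
  show "\<And>i j. i < 3 \<Longrightarrow> j < 3 \<Longrightarrow> i \<noteq> j \<Longrightarrow> continuous_on {p. pdom v w i j p} (C i j)" using h4 by blast
  show "\<And>i j k p. pdom v w i j p \<Longrightarrow> pdom v w j k p \<Longrightarrow> pdom v w i k p \<Longrightarrow>
         C i j p = 1 \<Longrightarrow> C j k p = 1 \<Longrightarrow> C i k p = 1" using h5 by blast
qed

lemma const_on_seg:
  assumes nc: "\<not> collinear {v 0, v 1, v 2}" and w: "w > 0" and small: "\<bar>DD v\<bar> / LL v < w/2"
    and ci: "crossing_info v w C" and k: "k < 3"
  shows "\<exists>c. \<forall>t\<in>{0<..1}. C k (pv k) (v k + of_real t * (II v - v k)) = c"
proof -
  define S where "S = (\<lambda>t. v k + of_real t * (II v - v k)) ` {0<..(1::real)}"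
  have kk: "pv k < 3" "k \<noteq> pv k" using nxpv3[OF k] shared_pv[OF k] by auto
  have sub: "S \<subseteq> {p. pdom v w k (pv k) p}"
    unfolding S_def using seg_pdom[OF nc w small k] by auto
  have con: "connected S" unfolding S_def
    by (rule connected_continuous_image) (auto intro!: continuous_intros)
  have cont: "continuous_on S (C k (pv k))"
    by (rule continuous_on_subset[OF ci_cont[OF ci k kk(1) kk(2)] sub])
  have fin: "finite (C k (pv k) ` S)"
  proof (rule finite_subset)
    show "C k (pv k) ` S \<subseteq> {1, -1}" using sub ci_pm[OF ci] by blast
  qed simp
  have "\<forall>f::complex \<Rightarrow> real. continuous_on S f \<and> finite (f ` S) \<longrightarrow> f constant_on S"
    using continuous_finite_range_constant_eq[THEN iffD1, OF con] by blast
  hence "C k (pv k) constant_on S" using cont fin by blast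
  thus ?thesis unfolding constant_on_def S_def by auto
qed

lemma C_at_I:
  assumes nc: "\<not> collinear {v 0, v 1, v 2}" and w: "w > 0" and small: "\<bar>DD v\<bar> / LL v < w/2"
    and ci: "crossing_info v w C" and ag: "agrees_with_folds v w F C" and k: "k < 3"
  shows "C k (pv k) (II v) = (if F k then 1 else -1)"
proof -
  obtain c where c: "\<And>t. t \<in> {0<..1} \<Longrightarrow> C k (pv k) (v k + of_real t * (II v - v k)) = c"
    using const_on_seg[OF nc w small ci k] by blast
  obtain e where e: "e > 0" and he: "\<And>p. pdom v w k (pv k) p \<and> infdist p (fold_seg v w k) < e \<Longrightarrow>
      C k (pv k) p = (if F k then 1 else -1)"
  proof -
    have "\<forall>i<3. \<exists>\<epsilon>>0. \<forall>p. pdom v w i (pv i) p \<and> infdist p (fold_seg v w i) < \<epsilon> \<longrightarrow>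
                    C i (pv i) p = (if F i then 1 else -1)" using ag unfolding agrees_with_folds_def .
    hence "\<exists>\<epsilon>>0. \<forall>p. pdom v w k (pv k) p \<and> infdist p (fold_seg v w k) < \<epsilon> \<longrightarrow>
                    C k (pv k) p = (if F k then 1 else -1)" using k by blast
    thus ?thesis using that by blast
  qed
  define d where "d = cmod (II v - v k) + 1"
  have d: "d > 0" by (simp add: d_def add_nonneg_pos)
  define t0 where "t0 = min 1 (e / (2 * d))"
  have t0: "0 < t0" "t0 \<le> 1" using e d by (auto simp: t0_def)
  define p0 where "p0 = v k + of_real t0 * (II v - v k)"
  have "dist p0 (v k) = t0 * cmod (II v - v k)" using t0 by (simp add: p0_def dist_norm norm_mult)
  also have "\<dots> \<le> (e / (2 * d)) * cmod (II v - v k)" by (rule mult_right_mono) (auto simp: t0_def)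
  also have "\<dots> < e"
  proof -
    have "cmod (II v - v k) < 2 * d" by (simp add: d_def add_nonneg_pos)
    hence "(e / (2 * d)) * cmod (II v - v k) < (e / (2 * d)) * (2 * d)"
      using e d by (intro mult_strict_left_mono) auto
    thus ?thesis using d by simp
  qed
  finally have "dist p0 (v k) < e" .
  moreover have "infdist p0 (fold_seg v w k) \<le> dist p0 (v k)"
    by (rule infdist_le) (rule vk_fold[OF nzk[OF nc k]])
  ultimately have "infdist p0 (fold_seg v w k) < e" by linarith
  moreover have "pdom v w k (pv k) p0" unfolding p0_def by (rule seg_pdom[OF nc w small k t0])
  ultimately have "C k (pv k) p0 = (if F k then 1 else -1)" using he by blast
  moreover have "C k (pv k) p0 = c" unfolding p0_def using c t0 by simp
  moreover have "C k (pv k) (II v) = c" using c[of 1] by simp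
  ultimately show ?thesis by simp
qed

lemma part1:
  assumes nc: "\<not> collinear {v 0, v 1, v 2}" and w: "w > 0" and st: "same_type F" and al: "allowed v w F"
  shows "3 * sqrt 3 \<le> ribbonlength v w"
proof (rule ccontr)
  assume "\<not> ?thesis"
  hence small: "\<bar>DD v\<bar> / LL v < w/2" using small_of_ribbon[OF nc w] by simp
  obtain C where ci: "crossing_info v w C" and ag: "agrees_with_folds v w F C"
    using al unfolding allowed_def by blast
  define s where "s = (if F 0 then 1 else -1 :: real)"
  have F: "F 1 = F 0" "F 2 = F 0" using st unfolding same_type_def by auto
  have c0: "C 0 2 (II v) = s" using C_at_I[OF nc w small ci ag, of 0] by (simp add: s_def)
  have c1: "C 1 0 (II v) = s" using C_at_I[OF nc w small ci ag, of 1] F by (simp add: s_def)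
  have c2: "C 2 1 (II v) = s" using C_at_I[OF nc w small ci ag, of 2] F by (simp add: s_def)
  have pd: "\<And>i j. i < 3 \<Longrightarrow> j < 3 \<Longrightarrow> i \<noteq> j \<Longrightarrow> pdom v w i j (II v)"
    by (rule I_pdom[OF nc w small])
  have anti: "\<And>i j. i < 3 \<Longrightarrow> j < 3 \<Longrightarrow> i \<noteq> j \<Longrightarrow> C j i (II v) = - C i j (II v)"
    using ci_anti[OF ci] pd by blast
  have tr: "\<And>i j k. i < 3 \<Longrightarrow> j < 3 \<Longrightarrow> k < 3 \<Longrightarrow> i \<noteq> j \<Longrightarrow> j \<noteq> k \<Longrightarrow> i \<noteq> k \<Longrightarrow>
      C i j (II v) = 1 \<Longrightarrow> C j k (II v) = 1 \<Longrightarrow> C i k (II v) = 1"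
    using ci_tr[OF ci] pd by blast
  show False
  proof (cases "F 0")
    case True
    hence s1: "s = 1" by (simp add: s_def)
    have "C 1 2 (II v) = 1" using tr[of 1 0 2] c1 c0 s1 by simp
    moreover have "C 2 1 (II v) = - C 1 2 (II v)" using anti[of 1 2] by simp
    ultimately show False using c2 s1 by simp
  next
    case False
    hence s1: "s = -1" by (simp add: s_def)
    have a: "C 0 1 (II v) = 1" using anti[of 1 0] c1 s1 by simp
    have b: "C 1 2 (II v) = 1" using anti[of 2 1] c2 s1 by simp
    have "C 0 2 (II v) = 1" using tr[of 0 1 2] a b by simp
    thus False using c0 s1 by simp
  qed
qed



lemma sum_offsets_raw:
  "Im (cnj (v 1 - v 0) * (p - v 0)) + Im (cnj (v 2 - v 1) * (p - v 1)) + Im (cnj (v 0 - v 2) * (p - v 2)) = DD v"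
  unfolding DD_def by (simp add: algebra_simps)

context
  fixes v :: "nat \<Rightarrow> complex"
  assumes nc: "\<not> collinear {v 0, v 1, v 2}" and eq: "equilateral v"
begin

definition "sd = ell v 0"

lemma ell_eq: "k < 3 \<Longrightarrow> ell v k = sd"
proof -
  assume "k < 3" hence "k = 0 \<or> k = 1 \<or> k = 2" by auto
  thus ?thesis using eq unfolding equilateral_def sd_def ell_def dist_norm
    by (elim disjE) (simp_all add: norm_minus_commute)
qed

lemma sd_pos: "sd > 0" using ell_pos[OF nc, of 0] by (simp add: sd_def)

lemma norms: "k < 3 \<Longrightarrow> cmod (AA v k) = sd \<and> cmod (BB v k) = sd \<and> cmod (BB v k - AA v k) = sd"
proof -
  assume k: "k < 3"
  hence "k = 0 \<or> k = 1 \<or> k = 2" by auto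
  moreover have "ell v 0 = sd" "ell v 1 = sd" "ell v 2 = sd" using ell_eq by auto
  ultimately show ?thesis unfolding ell_def AA_def BB_def
    by (elim disjE) (simp_all add: norm_minus_commute)
qed

lemma cc_half: "k < 3 \<Longrightarrow> cc v k = 1/2"
proof -
  assume k: "k < 3"
  note n = norms[OF k]
  have "(cmod (BB v k - AA v k))^2 = (cmod (AA v k))^2 + (cmod (BB v k))^2 - 2 * Re (cnj (AA v k) * BB v k)"
    unfolding cmod_power2 by (simp add: power2_eq_square algebra_simps)
  hence "Re (cnj (AA v k) * BB v k) = sd^2 / 2" using n by simp
  thus ?thesis unfolding cc_alt using n sd_pos by (simp add: power2_eq_square)
qed

lemma DD_sq: "(DD v)^2 = 3 * sd^4 / 4"
proof -
  note n = norms[of 0]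
  let ?A = "AA v 0" and ?B = "BB v 0"
  define R where "R = Re (cnj ?A * ?B)"
  define I where "I = Im (cnj ?A * ?B)"
  have "(cmod (?B - ?A))^2 = (cmod ?A)^2 + (cmod ?B)^2 - 2 * Re (cnj ?A * ?B)"
    unfolding cmod_power2 by (simp add: power2_eq_square algebra_simps)
  hence r: "R = sd^2 / 2" using n unfolding R_def by simp
  have m: "cmod (cnj ?A * ?B) = cmod ?A * cmod ?B" by (simp add: norm_mult)
  have "(Re (cnj ?A * ?B))^2 + (Im (cnj ?A * ?B))^2 = (cmod ?A * cmod ?B)^2"
    unfolding m[symmetric] cmod_power2 ..
  hence "R^2 + I^2 = (sd * sd)^2" using n unfolding R_def I_def by simp
  hence "I^2 = 3 * sd^4 / 4" unfolding r by (simp add: power2_eq_square power4_eq_xxxx field_simps)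
  moreover have "I = - DD v" unfolding I_def by (rule Im_AB) simp
  ultimately show ?thesis by simp
qed

definition "ww = sd / sqrt 3"

lemma ww_eq: "ww = sd / sqrt 3" by (simp add: ww_def)

lemma ww_pos: "ww > 0" using sd_pos by (simp add: ww_def)

lemma ww_sq: "ww^2 = sd^2 / 3" by (simp add: ww_def power_divide)

lemma HH_norm: "k < 3 \<Longrightarrow> cmod (HH v ww k) = sd / 3"
proof -
  assume k: "k < 3"
  have nz: "Im (cnj (AA v k) * BB v k) \<noteq> 0" by (rule nzk[OF nc k])
  have N: "(cmod (bisector v k))^2 = 3" using N[OF nz] cc_half[OF k] by simp
  hence b: "cmod (bisector v k) = sqrt 3" by (metis norm_ge_zero real_sqrt_unique)
  have nn: "cmod (of_real ((cmod (bisector v k))^2) :: complex) = (cmod (bisector v k))^2"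
    by (simp only: norm_of_real) simp
  have "cmod (HH v ww k) = ww * cmod (bisector v k) / (cmod (bisector v k))^2"
    unfolding HH_def norm_divide nn norm_mult using ww_pos by simp
  also have "\<dots> = sd / 3" unfolding N b ww_def by (simp add: field_simps)
  finally show ?thesis .
qed

lemma immersed: "immersed_away_from_folds v ww"
  unfolding immersed_away_from_folds_def
proof (intro allI impI)
  fix i :: nat assume i: "i < 3"
  have ii: "nx i < 3" "pv (nx i) = i" using nxpv3[OF i] by auto
  have nz: "Im (cnj (AA v i) * BB v i) \<noteq> 0" by (rule nzk[OF nc i])
  have nz': "Im (cnj (AA v (nx i)) * BB v (nx i)) \<noteq> 0" by (rule nzk[OF nc ii(1)])
  let ?B = "BB v i"
  have nB: "cmod ?B = sd" using norms[OF i] by simp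
  have le1: "Re (cnj ?B * (q - v i)) \<le> sd^2 / 3" if qin: "q \<in> fold_seg v ww i" for q
  proof -
    obtain s where q': "q = (1 - s) *\<^sub>R (v i - HH v ww i) + s *\<^sub>R (v i + HH v ww i)" and s: "0 \<le> s" "s \<le> 1"
      using qin unfolding fold_seg_eq[OF A0[OF nz] B0[OF nz]] in_segment by blast
    have "q - v i = of_real (2 * s - 1) * HH v ww i"
      unfolding q' by (simp add: scaleR_conv_of_real algebra_simps)
    hence "Re (cnj ?B * (q - v i)) = (2 * s - 1) * Re (cnj ?B * HH v ww i)"
      by (simp only: mult.left_commute[of "cnj _"] Re_ofr)
    also have "\<dots> \<le> \<bar>2 * s - 1\<bar> * \<bar>Re (cnj ?B * HH v ww i)\<bar>" by (metis abs_ge_self abs_mult)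
    also have "\<dots> \<le> 1 * (sd * (sd / 3))"
    proof (rule mult_mono)
      show "\<bar>2 * s - 1\<bar> \<le> 1" using s by auto
      show "\<bar>Re (cnj ?B * HH v ww i)\<bar> \<le> sd * (sd / 3)"
        using Re_cnj_le[of ?B "HH v ww i"] nB HH_norm[OF i] by simp
    qed auto
    finally show ?thesis by (simp add: power2_eq_square)
  qed
  have ge2: "Re (cnj ?B * (q - v i)) \<ge> 2 * sd^2 / 3" if qin: "q \<in> fold_seg v ww (nx i)" for q
  proof -
    obtain s where q': "q = (1 - s) *\<^sub>R (v (nx i) - HH v ww (nx i)) + s *\<^sub>R (v (nx i) + HH v ww (nx i))" and s: "0 \<le> s" "s \<le> 1"
      using qin unfolding fold_seg_eq[OF A0[OF nz'] B0[OF nz']] in_segment by blast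
    have "q - v i = of_real 1 * ?B + of_real (2 * s - 1) * HH v ww (nx i)"
      unfolding q' by (simp add: scaleR_conv_of_real algebra_simps BB_def)
    hence "Re (cnj ?B * (q - v i)) = 1 * Re (cnj ?B * ?B) + (2 * s - 1) * Re (cnj ?B * HH v ww (nx i))"
      by (simp only: Re_lin)
    moreover have "Re (cnj ?B * ?B) = sd^2"
    proof -
      have "Re (cnj ?B * ?B) = (cmod ?B)^2" unfolding cmod_power2 by (simp add: power2_eq_square)
      thus ?thesis using nB by simp
    qed
    moreover have "(2 * s - 1) * Re (cnj ?B * HH v ww (nx i)) \<ge> - (sd * (sd / 3))"
    proof -
      have "\<bar>(2 * s - 1) * Re (cnj ?B * HH v ww (nx i))\<bar> \<le> 1 * (sd * (sd / 3))"
        unfolding abs_mult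
      proof (rule mult_mono)
        show "\<bar>2 * s - 1\<bar> \<le> 1" using s by auto
        show "\<bar>Re (cnj ?B * HH v ww (nx i))\<bar> \<le> sd * (sd / 3)"
          using Re_cnj_le[of ?B "HH v ww (nx i)"] nB HH_norm[OF ii(1)] by simp
      qed auto
      thus ?thesis by linarith
    qed
    ultimately show ?thesis by (simp add: power2_eq_square)
  qed
  show "fold_seg v ww i \<inter> fold_seg v ww (nx i) = {}"
  proof (rule ccontr)
    assume "fold_seg v ww i \<inter> fold_seg v ww (nx i) \<noteq> {}"
    then obtain q where "q \<in> fold_seg v ww i" "q \<in> fold_seg v ww (nx i)" by blast
    from le1[OF this(1)] ge2[OF this(2)] have "2 * sd^2 / 3 \<le> sd^2 / 3" by linarith
    thus False using sd_pos by simp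
  qed
qed

lemma no_triple: "\<not> (p \<in> piece v ww 0 \<and> p \<in> piece v ww 1 \<and> p \<in> piece v ww 2)"
proof
  assume h: "p \<in> piece v ww 0 \<and> p \<in> piece v ww 1 \<and> p \<in> piece v ww 2"
  have o: "\<bar>edge_offset v k p\<bar> < ww / 2" if "k < 3" for k
  proof -
    have "k = 0 \<or> k = 1 \<or> k = 2" using that by auto
    thus ?thesis using h unfolding piece_def by (elim disjE) auto
  qed
  have e: "edge_offset v 0 p + edge_offset v 1 p + edge_offset v 2 p = DD v / sd"
  proof -
    have n: "cmod (v 1 - v 0) = sd" "cmod (v 2 - v 1) = sd" "cmod (v 0 - v 2) = sd"
      using ell_eq[of 0] ell_eq[of 1] ell_eq[of 2] by (auto simp: ell_def)
    have "edge_offset v 0 p + edge_offset v 1 p + edge_offset v 2 p =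
      (Im (cnj (v 1 - v 0) * (p - v 0)) + Im (cnj (v 2 - v 1) * (p - v 1)) + Im (cnj (v 0 - v 2) * (p - v 2))) / sd"
      unfolding edge_offset_def nxpv sgn_eq n by (simp add: add_divide_distrib Im_divide_of_real)
    thus ?thesis unfolding sum_offsets_raw .
  qed
  have "\<bar>DD v / sd\<bar> < 3 * (ww / 2)" unfolding e[symmetric]
    using o[of 0] o[of 1] o[of 2] abs_triangle_ineq[of "edge_offset v 0 p + edge_offset v 1 p" "edge_offset v 2 p"]
      abs_triangle_ineq[of "edge_offset v 0 p" "edge_offset v 1 p"] by linarith
  hence "(DD v / sd)^2 < (3 * (ww / 2))^2"
    by (metis abs_ge_zero power2_abs power_strict_mono zero_less_numeral)
  hence "(DD v)^2 / sd^2 < 9 * ww^2 / 4" by (simp add: power_divide power_mult_distrib)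
  thus False unfolding DD_sq ww_sq using sd_pos by (simp add: field_simps power_def numeral_eq_Suc)
qed

end



lemma pv_cases: "i < 3 \<Longrightarrow> j < 3 \<Longrightarrow> i \<noteq> j \<Longrightarrow> (j = pv i \<longleftrightarrow> i \<noteq> pv j)"
proof -
  assume "i < 3" "j < 3" "i \<noteq> j"
  hence "(i = 0 \<or> i = 1 \<or> i = 2) \<and> (j = 0 \<or> j = 1 \<or> j = 2)" by auto
  thus ?thesis using \<open>i \<noteq> j\<close> by (elim conjE disjE) simp_all
qed

lemma three_cover: "(i::nat) < 3 \<Longrightarrow> j < 3 \<Longrightarrow> k < 3 \<Longrightarrow> i \<noteq> j \<Longrightarrow> j \<noteq> k \<Longrightarrow> i \<noteq> k \<Longrightarrow>
   m < 3 \<Longrightarrow> m = i \<or> m = j \<or> m = k"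
  by arith

lemma part2:
  assumes nc: "\<not> collinear {v 0, v 1, v 2}" and eq: "equilateral v" and st: "same_type F"
  shows "\<exists>w>0. allowed v w F \<and> ribbonlength v w = 3 * sqrt 3"
proof (intro exI conjI)
  let ?w = "ww v"
  show wp: "?w > 0" by (rule ww_pos[OF nc eq])
  have L: "LL v = 3 * sd v" using ell_eq[OF nc eq, of 0] ell_eq[OF nc eq, of 1] ell_eq[OF nc eq, of 2]
    by (simp add: LL_def)
  show "ribbonlength v ?w = 3 * sqrt 3"
  proof -
    have "ww v = sd v / sqrt 3" by (rule ww_eq[OF nc eq])
    thus ?thesis unfolding ribbon_eq L using sd_pos[OF nc eq] by simp
  qed
  define s where "s = (if F 0 then 1 else -1 :: real)"
  define C where "C = (\<lambda>i j (p::complex). if j = pv i then s else - s)"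
  have tri0: False if d: "i < 3" "j < 3" "k < 3" "i \<noteq> j" "j \<noteq> k" "i \<noteq> k" "p \<in> piece v ?w i" "p \<in> piece v ?w j" "p \<in> piece v ?w k" for i j k p
  proof -
    have "p \<in> piece v ?w m" if "m < 3" for m
      using three_cover[OF d(1-6) that] d(7-9) by auto
    thus False using no_triple[OF nc eq, of p] by auto
  qed
  have tri: False if "pdom v ?w i j p" "pdom v ?w j k p" "pdom v ?w i k p" for i j k p
    using that unfolding pdom_def by (intro tri0[of i j k p]) auto
  have ci: "crossing_info v ?w C"
    unfolding crossing_info_def
  proof (intro conjI allI impI)
    fix i j p assume "pdom v ?w i j p"
    show "C i j p = 1 \<or> C i j p = -1" by (simp add: C_def s_def)
  next
    fix i j p assume h: "pdom v ?w i j p"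
    hence "i < 3" "j < 3" "i \<noteq> j" unfolding pdom_def by auto
    from pv_cases[OF this] have "j = pv i \<longleftrightarrow> i \<noteq> pv j" .
    thus "C j i p = - C i j p" by (auto simp: C_def)
  next
    fix i i' j p assume h: "pdom v ?w i j p \<and> pdom v ?w i' j p \<and> i \<noteq> i' \<and> p \<in> fold_seg v ?w (shared i i')"
    hence False unfolding pdom_def by (intro tri0[of i j i' p]) auto
    thus "C i j p = C i' j p" ..
  next
    fix i j show "continuous_on {p. pdom v ?w i j p} (C i j)"
      unfolding C_def by (rule continuous_on_const)
  next
    fix i j k p assume "pdom v ?w i j p \<and> pdom v ?w j k p \<and> pdom v ?w i k p \<and> C i j p = 1 \<and> C j k p = 1"
    thus "C i k p = 1" using tri by blast
  qed
  have ag: "agrees_with_folds v ?w F C"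
    unfolding agrees_with_folds_def
  proof (intro allI impI)
    fix i :: nat assume i: "i < 3"
    have "i = 0 \<or> i = 1 \<or> i = 2" using i by auto
    hence "F i = F 0" using st unfolding same_type_def by (elim disjE) auto
    thus "\<exists>e>0. \<forall>p. pdom v ?w i (pv i) p \<and> infdist p (fold_seg v ?w i) < e \<longrightarrow> C i (pv i) p = (if F i then 1 else -1)"
      by (intro exI[of _ 1]) (simp add: C_def s_def)
  qed
  show "allowed v ?w F" unfolding allowed_def using immersed[OF nc eq] ci ag by blast
qed


theorem theorem5p6:
  shows "(\<forall>(v :: nat \<Rightarrow> complex) (w :: real) (F :: nat \<Rightarrow> bool).
            \<not> collinear {v 0, v 1, v 2} \<and> w > 0 \<and> same_type F \<and> allowed v w F
            \<longrightarrow> 3 * sqrt 3 \<le> ribbonlength v w) \<and>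
         (\<forall>(v :: nat \<Rightarrow> complex) (F :: nat \<Rightarrow> bool).
            \<not> collinear {v 0, v 1, v 2} \<and> equilateral v \<and> same_type F
            \<longrightarrow> (\<exists>w>0. allowed v w F \<and> ribbonlength v w = 3 * sqrt 3))"
  using part1 part2 by blast

end
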